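(* Let $L=L(m,n;k,l)$ be an $L$-shaped supergrid graph with $m-k=n-l=1$ and $l>1$, and let $s=(s_x,s_y)$, $t=(t_x,t_y)$ be distinct vertices of $L$. Then: (UB1) if $s_y,t_y\le l$, every simple path between $s$ and $t$ has at most $|t_y-s_y|+1$ vertices; (UB2) if $s_y<l$ and $t_x>1$, every simple path between $s$ and $t$ has at most $n-s_y+t_x$ vertices; (UB3) if $s_x=t_x=1$, $\max\{s_y,t_y\}=n$, and either $k>1$ or ($k=1$ and $\min\{s_y,t_y\}>1$), every simple path between $s$ and $t$ has at most $|t_y-s_y|+2$ vertices.
   Context: The infinite supergrid graph has as vertices all points $(x,y)\in\mathbb{Z}^2$, two distinct vertices $u,v$ being adjacent iff $|u_x-v_x|\le 1$ and $|u_y-v_y|\le 1$. For integers $m,n>1$ and $k,l\ge 1$ with $m-k\ge 1$, $n-l\ge 1$, $L(m,n;k,l)$ is the subgraph induced by $\{(x,y):1\le x\le m,\ 1\le y\le n\}\setminus\{(x,y): m-k+1\le x\le m,\ 1\le y\le l\}$. The length of a path is its number of vertices. *)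

theory Defs
  imports Main
begin

definition sg_adj :: "int \<times> int \<Rightarrow> int \<times> int \<Rightarrow> bool" where
  "sg_adj u v \<longleftrightarrow> u \<noteq> v \<and> \<bar>fst u - fst v\<bar> \<le> 1 \<and> \<bar>snd u - snd v\<bar> \<le> 1"

definition Lshape :: "int \<Rightarrow> int \<Rightarrow> int \<Rightarrow> int \<Rightarrow> (int \<times> int) set" where
  "Lshape m n k l =
     {(x, y). 1 \<le> x \<and> x \<le> m \<and> 1 \<le> y \<and> y \<le> n}
     - {(x, y). m - k + 1 \<le> x \<and> x \<le> m \<and> 1 \<le> y \<and> y \<le> l}"

text \<open>A simple path from s to t in the subgraph induced by V, given as the list of its
  vertices; its length is the number of vertices (length of the list).\<close>
definition sg_path :: "(int \<times> int) set \<Rightarrow> int \<times> int \<Rightarrow> int \<times> int \<Rightarrow> (int \<times> int) list \<Rightarrow> bool" where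
  "sg_path V s t P \<longleftrightarrow> P \<noteq> [] \<and> hd P = s \<and> last P = t \<and> distinct P \<and> set P \<subseteq> V \<and>
     (\<forall>i. Suc i < length P \<longrightarrow> sg_adj (P ! i) (P ! Suc i))"

end

theory Submission
  imports Defs
begin

lemma memL:
  assumes "m - k = 1" "n - l = 1" "k \<ge> 1" "l \<ge> 1"
  shows "(x,y) \<in> Lshape m n k l \<longleftrightarrow> (x = 1 \<and> 1 \<le> y \<and> y \<le> n) \<or> (y = n \<and> 1 \<le> x \<and> x \<le> m)"
  using assms by (auto simp: Lshape_def)

lemma ivt:
  fixes g :: "nat \<Rightarrow> int"
  assumes "\<And>i. Suc i \<le> j \<Longrightarrow> \<bar>g i - g (Suc i)\<bar> \<le> 1 \<or> (g i = a \<and> g (Suc i) = a+2) \<or> (g i = a+2 \<and> g (Suc i) = a)"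
    and "i \<le> j" "g i \<le> c" "c \<le> g j" "c \<noteq> a+1"
  shows "\<exists>k. i \<le> k \<and> k \<le> j \<and> g k = c"
  using assms
proof (induction j)
  case 0 then show ?case by auto
next
  case (Suc j)
  show ?case
  proof (cases "i = Suc j")
    case True then show ?thesis using Suc.prems by auto
  next
    case False
    hence ij: "i \<le> j" using Suc.prems by auto
    show ?thesis
    proof (cases "c \<le> g j")
      case True
      have "\<exists>k. i \<le> k \<and> k \<le> j \<and> g k = c"
        by (rule Suc.IH) (use Suc.prems ij True in auto)
      then show ?thesis by auto
    next
      case False
      have "\<bar>g j - g (Suc j)\<bar> \<le> 1 \<or> (g j = a \<and> g (Suc j) = a+2) \<or> (g j = a+2 \<and> g (Suc j) = a)"
        using Suc.prems(1) by auto
      then have "g (Suc j) = c" using False Suc.prems by auto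
      then show ?thesis using Suc.prems by auto
    qed
  qed
qed

lemma ivt2:
  fixes g :: "nat \<Rightarrow> int"
  assumes st: "\<And>i. Suc i \<le> j \<Longrightarrow> \<bar>g i - g (Suc i)\<bar> \<le> 1 \<or> (g i = a \<and> g (Suc i) = a+2) \<or> (g i = a+2 \<and> g (Suc i) = a)"
    and "i \<le> j" "(g i \<le> c \<and> c \<le> g j) \<or> (g j \<le> c \<and> c \<le> g i)" "c \<noteq> a+1"
  shows "\<exists>k. i \<le> k \<and> k \<le> j \<and> g k = c"
proof (cases "g i \<le> c \<and> c \<le> g j")
  case True then show ?thesis using ivt[of j g a i c] assms by blast
next
  case False
  have "\<exists>k. i \<le> k \<and> k \<le> j \<and> - g k = - c"
  proof (rule ivt[of j "\<lambda>i. - g i" "-(a+2)" i "-c"])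
    fix i assume "Suc i \<le> j"
    from st[OF this] show "\<bar>- g i - - g (Suc i)\<bar> \<le> 1 \<or> (- g i = - (a + 2) \<and> - g (Suc i) = - (a + 2) + 2) \<or> (- g i = - (a + 2) + 2 \<and> - g (Suc i) = - (a + 2))"
      by auto
  qed (use assms False in auto)
  then show ?thesis by auto
qed

lemma noescape:
  fixes g :: "nat \<Rightarrow> int"
  assumes st: "\<And>i. Suc i \<le> q \<Longrightarrow> \<bar>g i - g (Suc i)\<bar> \<le> 1 \<or> (g i = a \<and> g (Suc i) = a+2) \<or> (g i = a+2 \<and> g (Suc i) = a)"
    and inj: "\<And>i i'. i \<le> q \<Longrightarrow> i' \<le> q \<Longrightarrow> g i = g i' \<Longrightarrow> i = i'"
    and "p \<le> j" "j \<le> q" "c \<noteq> a+1"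
    and "(g p \<le> c \<and> c \<le> g j) \<or> (g j \<le> c \<and> c \<le> g p)"
    and "(g j \<le> c \<and> c \<le> g q) \<or> (g q \<le> c \<and> c \<le> g j)"
    and "g j \<noteq> c"
  shows False
proof -
  obtain k1 where k1: "p \<le> k1" "k1 \<le> j" "g k1 = c"
    using ivt2[of j g a p c] st assms by auto
  obtain k2 where k2: "j \<le> k2" "k2 \<le> q" "g k2 = c"
    using ivt2[of q g a j c] st assms by auto
  have "k1 \<noteq> j" "k2 \<noteq> j" using k1 k2 assms by auto
  then have "k1 < k2" using k1 k2 by auto
  moreover have "k1 = k2" using inj[of k1 k2] k1 k2 assms by auto
  ultimately show False by auto
qed

definition fL :: "int \<times> int \<Rightarrow> int" where "fL v = fst v + snd v - 1"

lemma fL_inj: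
  assumes "m - k = 1" "n - l = 1" "k \<ge> 1" "l \<ge> 1" "u \<in> Lshape m n k l" "v \<in> Lshape m n k l" "fL u = fL v"
  shows "u = v"
proof -
  obtain a b c d where uv: "u = (a,b)" "v = (c,d)" by (cases u, cases v) auto
  show ?thesis using assms memL[OF assms(1-4), of a b] memL[OF assms(1-4), of c d]
    unfolding uv fL_def by auto
qed

lemma fL_step:
  assumes "m - k = 1" "n - l = 1" "k \<ge> 1" "l \<ge> 1" "u \<in> Lshape m n k l" "v \<in> Lshape m n k l" "sg_adj u v"
  shows "\<bar>fL u - fL v\<bar> \<le> 1 \<or> (fL u = l \<and> fL v = l+2) \<or> (fL u = l+2 \<and> fL v = l)"
proof -
  obtain a b c d where uv: "u = (a,b)" "v = (c,d)" by (cases u, cases v) auto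
  show ?thesis using assms memL[OF assms(1-4), of a b] memL[OF assms(1-4), of c d]
    unfolding uv fL_def sg_adj_def by auto
qed

lemma path_bound:
  assumes "m - k = 1" "n - l = 1" "k \<ge> 1" "l \<ge> 1"
    and P: "sg_path (Lshape m n k l) s t P"
    and rng: "\<And>v. v \<in> set P \<Longrightarrow> lo \<le> fL v \<and> fL v \<le> hi"
  shows "int (length P) \<le> hi - lo + 1"
proof -
  have d: "distinct P" and sub: "set P \<subseteq> Lshape m n k l" using P by (auto simp: sg_path_def)
  have "length P = card (set P)" using d by (simp add: distinct_card)
  also have "\<dots> = card (fL ` set P)"
  proof (rule card_image[symmetric])
    show "inj_on fL (set P)" using fL_inj[OF assms(1-4)] sub unfolding inj_on_def by blast
  qed
  also have "\<dots> \<le> card {lo..hi}"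
    by (rule card_mono) (use rng in auto)
  finally have "length P \<le> nat (hi - lo + 1)" by simp
  moreover have "P \<noteq> []" using P by (simp add: sg_path_def)
  ultimately show ?thesis by (cases "hi - lo + 1 \<ge> 0") auto
qed

lemma path_noescape:
  assumes "m - k = 1" "n - l = 1" "k \<ge> 1" "l \<ge> 1"
    and P: "sg_path (Lshape m n k l) s t P"
    and j: "j < length P" and c: "c \<noteq> l+1"
    and b1: "(fL s \<le> c \<and> c \<le> fL (P!j)) \<or> (fL (P!j) \<le> c \<and> c \<le> fL s)"
    and b2: "(fL (P!j) \<le> c \<and> c \<le> fL t) \<or> (fL t \<le> c \<and> c \<le> fL (P!j))"
    and ne: "fL (P!j) \<noteq> c"
  shows False
proof -
  have ne0: "P \<noteq> []" and hd: "hd P = s" and lst: "last P = t" and d: "distinct P"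
    and sub: "set P \<subseteq> Lshape m n k l"
    and adj: "\<And>i. Suc i < length P \<Longrightarrow> sg_adj (P ! i) (P ! Suc i)"
    using P by (auto simp: sg_path_def)
  define q where "q = length P - 1"
  have s0: "P ! 0 = s" using hd ne0 by (simp add: hd_conv_nth)
  have tq: "P ! q = t" using lst ne0 by (simp add: last_conv_nth q_def)
  have mem: "\<And>i. i \<le> q \<Longrightarrow> P ! i \<in> Lshape m n k l"
    using sub ne0 unfolding q_def by (metis One_nat_def Suc_pred length_greater_0_conv less_Suc_eq_le nth_mem subsetD)
  show False
  proof (rule noescape[of q "\<lambda>i. fL (P!i)" l 0 j c])
    fix i assume "Suc i \<le> q"
    then have "Suc i < length P" using ne0 unfolding q_def by auto
    then show "\<bar>fL (P ! i) - fL (P ! Suc i)\<bar> \<le> 1 \<or> (fL (P ! i) = l \<and> fL (P ! Suc i) = l + 2) \<or> (fL (P ! i) = l + 2 \<and> fL (P ! Suc i) = l)"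
      using fL_step[OF assms(1-4)] mem adj \<open>Suc i \<le> q\<close> by auto
  next
    fix i i' assume "i \<le> q" "i' \<le> q" "fL (P ! i) = fL (P ! i')"
    then have "P ! i = P ! i'" using fL_inj[OF assms(1-4)] mem by auto
    moreover have "i < length P" "i' < length P" using \<open>i \<le> q\<close> \<open>i' \<le> q\<close> ne0 unfolding q_def by (cases P, auto)+
    ultimately show "i = i'" using d by (simp add: nth_eq_iff_index_eq)
  qed (use j c b1 b2 ne s0 tq q_def in auto)
qed

theorem lemma10:
  fixes m n k l sx sy tx ty :: int
  assumes "m > 1" "n > 1" "k \<ge> 1" "l \<ge> 1"
    and "m - k = 1" "n - l = 1" "l > 1"
    and "(sx, sy) \<in> Lshape m n k l" "(tx, ty) \<in> Lshape m n k l"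
    and "(sx, sy) \<noteq> (tx, ty)"
  shows "(sy \<le> l \<and> ty \<le> l \<longrightarrow>
            (\<forall>P. sg_path (Lshape m n k l) (sx, sy) (tx, ty) P \<longrightarrow>
               int (length P) \<le> \<bar>ty - sy\<bar> + 1))
       \<and> (sy < l \<and> tx > 1 \<longrightarrow>
            (\<forall>P. sg_path (Lshape m n k l) (sx, sy) (tx, ty) P \<longrightarrow>
               int (length P) \<le> n - sy + tx))
       \<and> (sx = 1 \<and> tx = 1 \<and> max sy ty = n \<and> (k > 1 \<or> (k = 1 \<and> min sy ty > 1)) \<longrightarrow>
            (\<forall>P. sg_path (Lshape m n k l) (sx, sy) (tx, ty) P \<longrightarrow>
               int (length P) \<le> \<bar>ty - sy\<bar> + 2))"
proof -
  have A: "m - k = 1" "n - l = 1" "k \<ge> 1" "l \<ge> 1" using assms by auto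
  have ms: "(sx = 1 \<and> 1 \<le> sy \<and> sy \<le> n) \<or> (sy = n \<and> 1 \<le> sx \<and> sx \<le> m)"
    using memL[OF A] assms(8) by blast
  have mt: "(tx = 1 \<and> 1 \<le> ty \<and> ty \<le> n) \<or> (ty = n \<and> 1 \<le> tx \<and> tx \<le> m)"
    using memL[OF A] assms(9) by blast
  have inP: "\<And>P v. sg_path (Lshape m n k l) (sx, sy) (tx, ty) P \<Longrightarrow> v \<in> set P \<Longrightarrow>
      \<exists>j. j < length P \<and> v = P ! j"
    by (metis in_set_conv_nth)
  have ub1: "int (length P) \<le> \<bar>ty - sy\<bar> + 1"
    if h: "sy \<le> l" "ty \<le> l" and P: "sg_path (Lshape m n k l) (sx, sy) (tx, ty) P" for P
  proof -
    have fs: "fL (sx,sy) = sy" and ft: "fL (tx,ty) = ty" using ms mt h assms by (auto simp: fL_def)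
    have "int (length P) \<le> max sy ty - min sy ty + 1"
    proof (rule path_bound[OF A P])
      fix v assume "v \<in> set P"
      then obtain j where j: "j < length P" "v = P ! j" using inP[OF P] by blast
      show "min sy ty \<le> fL v \<and> fL v \<le> max sy ty"
      proof (rule ccontr)
        assume "\<not> ?thesis"
        then consider "fL v < min sy ty" | "fL v > max sy ty" by linarith
        then show False
        proof cases
          case 1
          show False by (rule path_noescape[OF A P j(1), of "min sy ty"]) (use 1 j fs ft h in auto)
        next
          case 2
          show False by (rule path_noescape[OF A P j(1), of "max sy ty"]) (use 2 j fs ft h in auto)
        qed
      qed
    qed
    then show ?thesis by auto
  qed
  have ub2: "int (length P) \<le> n - sy + tx"
    if h: "sy < l" "tx > 1" and P: "sg_path (Lshape m n k l) (sx, sy) (tx, ty) P" for P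
  proof -
    have fs: "fL (sx,sy) = sy" and ft: "fL (tx,ty) = tx + l" using ms mt h assms by (auto simp: fL_def)
    have "int (length P) \<le> (tx + l) - sy + 1"
    proof (rule path_bound[OF A P])
      fix v assume "v \<in> set P"
      then obtain j where j: "j < length P" "v = P ! j" using inP[OF P] by blast
      show "sy \<le> fL v \<and> fL v \<le> tx + l"
      proof (rule ccontr)
        assume "\<not> ?thesis"
        then consider "fL v < sy" | "fL v > tx + l" by linarith
        then show False
        proof cases
          case 1
          show False by (rule path_noescape[OF A P j(1), of "sy"]) (use 1 j fs ft h in auto)
        next
          case 2
          show False by (rule path_noescape[OF A P j(1), of "tx + l"]) (use 2 j fs ft h in auto)
        qed
      qed
    qed
    then show ?thesis using assms by auto
  qed
  have ub3: "int (length P) \<le> \<bar>ty - sy\<bar> + 2"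
    if h: "sx = 1" "tx = 1" "max sy ty = n" and P: "sg_path (Lshape m n k l) (sx, sy) (tx, ty) P" for P
  proof -
    have fs: "fL (sx,sy) = sy" and ft: "fL (tx,ty) = ty" using h by (auto simp: fL_def)
    have mn: "min sy ty \<le> l" using h assms ms mt by auto
    have "int (length P) \<le> (l + 2) - min sy ty + 1"
    proof (rule path_bound[OF A P])
      fix v assume "v \<in> set P"
      then obtain j where j: "j < length P" "v = P ! j" using inP[OF P] by blast
      show "min sy ty \<le> fL v \<and> fL v \<le> l + 2"
      proof (rule ccontr)
        assume "\<not> ?thesis"
        then consider "fL v < min sy ty" | "fL v > l + 2" by linarith
        then show False
        proof cases
          case 1
          show False by (rule path_noescape[OF A P j(1), of "min sy ty"]) (use 1 j fs ft h mn in auto)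
        next
          case 2
          show False by (rule path_noescape[OF A P j(1), of "l + 2"]) (use 2 j fs ft h ms mt assms in auto)
        qed
      qed
    qed
    then show ?thesis using h assms mn by auto
  qed
  show ?thesis using ub1 ub2 ub3 by blast
qed

end
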